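(* Let $\Omega\subset\mathbb{R}^d$ be a domain of finite measure. For $\Theta=(a,b)\in\mathbb{R}^d\times\mathbb{R}$ define $f_\Theta:\Omega\to\mathbb{R}$ by $f_\Theta(x):=H(a\cdot x+b)$, where $H$ is the Heaviside function. Then: 1. for any $\Theta_0=(a_0,b_0)$ with $a_0\ne0$ and any sequence $\{\Theta_n\}_{n\in\mathbb{N}}=\{(a_n,b_n)\}$ converging to $\Theta_0$, $f_{\Theta_n}\to f_{\Theta_0}$ almost everywhere in $\Omega$; 2. if in addition $\Omega$ is bounded, then for any degenerate parameter $\Theta_0=(0,b_0)$ there exists a non-degenerate $\Theta'=(a',b')$ (i.e. $a'\ne0$) such that $f_{\Theta_0}\equiv f_{\Theta'}$ in $\Omega$.
   Context: The Heaviside function is $H(t)=1$ for $t\ge0$ and $H(t)=0$ for $t<0$. *)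

theory Defs
  imports "HOL-Analysis.Analysis"
begin

definition heaviside :: "real \<Rightarrow> real" where
  "heaviside t = (if t \<ge> 0 then 1 else 0)"

definition fTheta :: "real^'d \<Rightarrow> real \<Rightarrow> real^'d \<Rightarrow> real" where
  "fTheta a b x = heaviside (a \<bullet> x + b)"

end

theory Submission
  imports Defs
begin

lemma part1:
  fixes a0 :: "real^'d" and a :: "nat \<Rightarrow> real^'d"
  assumes "a0 \<noteq> 0" "(\<lambda>n. (a n, b n)) \<longlonglongrightarrow> (a0, b0)"
  shows "AE x in lebesgue. x \<in> \<Omega> \<longrightarrow> (\<lambda>n. fTheta (a n) (b n) x) \<longlonglongrightarrow> fTheta a0 b0 x"
proof -
  have "negligible {x. a0 \<bullet> x = - b0}" using assms(1) negligible_hyperplane by blast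
  hence "AE x in lebesgue. x \<notin> {x. a0 \<bullet> x = - b0}"
    by (intro AE_not_in) (simp add: negligible_iff_null_sets)
  then show ?thesis
  proof (rule AE_mp, intro AE_I2 impI)
    fix x assume nx: "x \<notin> {x. a0 \<bullet> x = - b0}"
    have ta: "a \<longlonglongrightarrow> a0" using tendsto_fst[OF assms(2)] by simp
    have tb: "b \<longlonglongrightarrow> b0" using tendsto_snd[OF assms(2)] by simp
    have t: "(\<lambda>n. a n \<bullet> x + b n) \<longlonglongrightarrow> a0 \<bullet> x + b0"
      by (intro tendsto_add tendsto_inner ta tb tendsto_const)
    show "(\<lambda>n. fTheta (a n) (b n) x) \<longlonglongrightarrow> fTheta a0 b0 x"
    proof (cases "a0 \<bullet> x + b0 > 0")
      case True
      have "eventually (\<lambda>n. a n \<bullet> x + b n > 0) sequentially"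
        using order_tendstoD(1)[OF t True] .
      hence "eventually (\<lambda>n. fTheta (a n) (b n) x = fTheta a0 b0 x) sequentially"
        by eventually_elim (use True in \<open>simp add: fTheta_def heaviside_def\<close>)
      thus ?thesis by (rule tendsto_eventually)
    next
      case False
      hence neg: "a0 \<bullet> x + b0 < 0" using nx by auto
      have "eventually (\<lambda>n. a n \<bullet> x + b n < 0) sequentially"
        using order_tendstoD(2)[OF t neg] .
      hence "eventually (\<lambda>n. fTheta (a n) (b n) x = fTheta a0 b0 x) sequentially"
        by eventually_elim (use neg in \<open>simp add: fTheta_def heaviside_def\<close>)
      thus ?thesis by (rule tendsto_eventually)
    qed
  qed
qed

lemma part2:
  fixes \<Omega> :: "(real^'d) set"
  assumes "bounded \<Omega>"
  shows "\<exists>(a'::real^'d) (b'::real). a' \<noteq> 0 \<and> (\<forall>x\<in>\<Omega>. fTheta 0 b0 x = fTheta a' b' x)"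
proof -
  obtain r where r: "\<And>x. x \<in> \<Omega> \<Longrightarrow> norm x \<le> r" using assms bounded_iff by blast
  obtain k :: 'd where True by simp
  define e :: "real^'d" where "e = axis k 1"
  have e0: "e \<noteq> 0" by (simp add: e_def)
  have ne: "norm e = 1" by (simp add: e_def)
  have bnd: "\<bar>e \<bullet> x\<bar> \<le> r" if "x \<in> \<Omega>" for x
    using Cauchy_Schwarz_ineq2[of e x] ne r[OF that] by simp
  show ?thesis
  proof (cases "b0 \<ge> 0")
    case True
    have "\<forall>x\<in>\<Omega>. fTheta 0 b0 x = fTheta e (r + 1) x"
    proof
      fix x assume "x \<in> \<Omega>"
      then have "e \<bullet> x + (r + 1) \<ge> 0" using bnd[of x] by linarith
      then show "fTheta 0 b0 x = fTheta e (r + 1) x" using True by (simp add: fTheta_def heaviside_def)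
    qed
    then show ?thesis using e0 by blast
  next
    case False
    have "\<forall>x\<in>\<Omega>. fTheta 0 b0 x = fTheta e (- r - 1) x"
    proof
      fix x assume "x \<in> \<Omega>"
      then have "\<not> e \<bullet> x + (- r - 1) \<ge> 0" using bnd[of x] by linarith
      then show "fTheta 0 b0 x = fTheta e (- r - 1) x" using False by (simp add: fTheta_def heaviside_def)
    qed
    then show ?thesis using e0 by blast
  qed
qed

theorem mainTheorem15:
  fixes \<Omega> :: "(real^'d) set"
  assumes domain: "open \<Omega>" "connected \<Omega>" "\<Omega> \<noteq> {}"
    and finite_measure: "emeasure lebesgue \<Omega> < \<infinity>"
  shows "(\<forall>(a0::real^'d) (b0::real) (a::nat \<Rightarrow> real^'d) (b::nat \<Rightarrow> real).
            a0 \<noteq> 0 \<longrightarrow> (\<lambda>n. (a n, b n)) \<longlonglongrightarrow> (a0, b0) \<longrightarrow>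
            (AE x in lebesgue. x \<in> \<Omega> \<longrightarrow> (\<lambda>n. fTheta (a n) (b n) x) \<longlonglongrightarrow> fTheta a0 b0 x))
       \<and> (bounded \<Omega> \<longrightarrow>
            (\<forall>b0::real. \<exists>(a'::real^'d) (b'::real). a' \<noteq> 0 \<and>
               (\<forall>x\<in>\<Omega>. fTheta 0 b0 x = fTheta a' b' x)))"
proof (intro conjI allI impI)
  fix a0 :: "real^'d" and b0 :: real and a :: "nat \<Rightarrow> real^'d" and b :: "nat \<Rightarrow> real"
  assume "a0 \<noteq> 0" "(\<lambda>n. (a n, b n)) \<longlonglongrightarrow> (a0, b0)"
  then show "AE x in lebesgue. x \<in> \<Omega> \<longrightarrow> (\<lambda>n. fTheta (a n) (b n) x) \<longlonglongrightarrow> fTheta a0 b0 x" by (rule part1)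
next
  fix b0 :: real assume "bounded \<Omega>"
  then show "\<exists>(a'::real^'d) (b'::real). a' \<noteq> 0 \<and> (\<forall>x\<in>\<Omega>. fTheta 0 b0 x = fTheta a' b' x)" by (rule part2)
qed

end
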